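(* Let $d\ge 3$, let $q$ be a prime power, let $V=\mathbb{F}_q^d$ and $1\le k<d/2$. Let $G$ be a group with $\mathrm{PSL}_d(q)\trianglelefteq G\le \mathrm{Aut}(\mathrm{PSL}_d(q))=\mathrm{P}\Gamma\mathrm{L}_d(q)\rtimes\langle\iota\rangle$ and $G\not\le \mathrm{P}\Gamma\mathrm{L}_d(q)$, acting naturally on $$\Omega_k^2=\{\{W,U\}\mid \dim W=k,\ \dim U=d-k,\ W\le U\}.$$ Then $G$ is not $\mathrm{IBIS}$.
   Context: Here $\iota$ is the graph (inverse-transpose) automorphism, which acts on subspaces of $V$ as the standard polarity sending a $k$-dimensional subspace to a $(d-k)$-dimensional one (reversing inclusions). A base of a permutation group is a sequence of points with trivial pointwise stabilizer; it is irredundant if each successive stabilizer is strictly smaller. $G$ is $\mathrm{IBIS}$ if all irredundant bases have the same cardinality. *)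

theory Defs
  imports "HOL-Analysis.Analysis" "HOL-Algebra.Algebra"
begin

text \<open>V = F_q^d is modelled as 'a^'n with 'a a finite field (so q = CARD('a) is a
prime power) and d = CARD('n).\<close>

definition flags2 :: "nat \<Rightarrow> ('a::{field,finite}^'n) set set set" where
  "flags2 k = {{W, U} | W U. vec.subspace W \<and> vec.subspace U \<and>
       vec.dim W = k \<and> vec.dim U = CARD('n) - k \<and> W \<subseteq> U}"

definition field_aut :: "('a::field \<Rightarrow> 'a) \<Rightarrow> bool" where
  "field_aut s \<longleftrightarrow> bij s \<and> (\<forall>a b. s (a + b) = s a + s b) \<and> (\<forall>a b. s (a * b) = s a * s b)"

definition semilinear :: "('a::field^'n \<Rightarrow> 'a^'n) \<Rightarrow> bool" where
  "semilinear f \<longleftrightarrow> bij f \<and> (\<forall>x y. f (x + y) = f x + f y) \<and>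
     (\<exists>s. field_aut s \<and> (\<forall>c x. f (c *s x) = s c *s f x))"

definition std_perp :: "('a::field^'n) set \<Rightarrow> ('a^'n) set" where
  "std_perp S = {x. \<forall>y\<in>S. sum (\<lambda>j. x $ j * y $ j) UNIV = 0}"

text \<open>Induced permutation of the set Omega of flags (extensional, as in BijGroup).\<close>
definition induced :: "('a set \<Rightarrow> 'a set) \<Rightarrow> 'a set set set \<Rightarrow> ('a set set \<Rightarrow> 'a set set)" where
  "induced h Om = (\<lambda>w\<in>Om. h ` w)"

definition PSL_perms :: "nat \<Rightarrow> (('a::{field,finite}^'n) set set \<Rightarrow> ('a^'n) set set) set" where
  "PSL_perms k = {induced (\<lambda>S. (\<lambda>x. M *v x) ` S) (flags2 k) | M :: 'a^'n^'n. det M = 1}"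

definition PGammaL_perms :: "nat \<Rightarrow> (('a::{field,finite}^'n) set set \<Rightarrow> ('a^'n) set set) set" where
  "PGammaL_perms k = {induced (\<lambda>S. f ` S) (flags2 k) | f :: 'a^'n \<Rightarrow> 'a^'n. semilinear f}"

definition iota_perm :: "nat \<Rightarrow> (('a::{field,finite}^'n) set set \<Rightarrow> ('a^'n) set set)" where
  "iota_perm k = induced std_perp (flags2 k)"

text \<open>Aut(PSL_d(q)) = P Gamma L_d(q) extended by the graph automorphism iota, acting on Omega.\<close>
definition Aut_perms :: "nat \<Rightarrow> (('a::{field,finite}^'n) set set \<Rightarrow> ('a^'n) set set) set" where
  "Aut_perms k = generate (BijGroup (flags2 k)) (insert (iota_perm k) (PGammaL_perms k))"

definition pstab :: "('b \<Rightarrow> 'b) set \<Rightarrow> 'b list \<Rightarrow> ('b \<Rightarrow> 'b) set" where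
  "pstab G bs = {g\<in>G. \<forall>x\<in>set bs. g x = x}"

definition is_base :: "'b set \<Rightarrow> ('b \<Rightarrow> 'b) set \<Rightarrow> 'b list \<Rightarrow> bool" where
  "is_base Om G bs \<longleftrightarrow> set bs \<subseteq> Om \<and> pstab G bs = {\<one>\<^bsub>BijGroup Om\<^esub>}"

definition irredundant_base :: "'b set \<Rightarrow> ('b \<Rightarrow> 'b) set \<Rightarrow> 'b list \<Rightarrow> bool" where
  "irredundant_base Om G bs \<longleftrightarrow> is_base Om G bs \<and>
     (\<forall>i < length bs. pstab G (take (Suc i) bs) \<subset> pstab G (take i bs))"

definition IBIS :: "'b set \<Rightarrow> ('b \<Rightarrow> 'b) set \<Rightarrow> bool" where
  "IBIS Om G \<longleftrightarrow> (\<forall>b1 b2. irredundant_base Om G b1 \<and> irredundant_base Om G b2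
      \<longrightarrow> length b1 = length b2)"

end

theory Submission
  imports Defs
begin

lemma pstab_append: "pstab G (xs @ ys) = pstab (pstab G xs) ys"
  unfolding pstab_def by auto

lemma pstab_sub: "pstab G xs \<subseteq> G"
  unfolding pstab_def by auto

lemma pstab_Nil[simp]: "pstab G [] = G"
  unfolding pstab_def by auto

lemma pstab_Cons: "pstab G (x # xs) = pstab (pstab G [x]) xs"
  using pstab_append[of G "[x]" xs] by simp

fun ext :: "('b \<Rightarrow> 'b) set \<Rightarrow> 'b list \<Rightarrow> 'b list" where
  "ext H [] = []"
| "ext H (x # xs) = (if pstab H [x] = H then ext H xs else x # ext (pstab H [x]) xs)"

lemma pstab_ext: "pstab H (ext H xs) = pstab H xs"
proof (induction xs arbitrary: H)
  case Nil
  then show ?case by simp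
next
  case (Cons x xs)
  show ?case
  proof (cases "pstab H [x] = H")
    case True
    then show ?thesis using Cons pstab_Cons[of H x xs] by simp
  next
    case False
    then show ?thesis using Cons pstab_Cons[of H x xs]
      pstab_Cons[of H x "ext (pstab H [x]) xs"] by simp
  qed
qed

lemma set_ext: "set (ext H xs) \<subseteq> set xs"
  by (induction xs arbitrary: H) auto

lemma ext_strict:
  "\<forall>i < length (ext H xs). pstab H (take (Suc i) (ext H xs)) \<subset> pstab H (take i (ext H xs))"
proof (induction xs arbitrary: H)
  case Nil
  then show ?case by simp
next
  case (Cons x xs)
  show ?case
  proof (cases "pstab H [x] = H")
    case True
    then show ?thesis using Cons by simp
  next
    case False
    show ?thesis
    proof (intro allI impI)
      fix i assume i: "i < length (ext H (x # xs))"
      show "pstab H (take (Suc i) (ext H (x # xs))) \<subset> pstab H (take i (ext H (x # xs)))"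
      proof (cases i)
        case 0
        then show ?thesis using False pstab_sub[of H "[x]"] by auto
      next
        case (Suc j)
        have "j < length (ext (pstab H [x]) xs)" using i False Suc by simp
        then have "pstab (pstab H [x]) (take (Suc j) (ext (pstab H [x]) xs))
             \<subset> pstab (pstab H [x]) (take j (ext (pstab H [x]) xs))" using Cons by blast
        then show ?thesis using False Suc
          by (simp add: pstab_Cons[of H x "take (Suc j) _"] pstab_Cons[of H x "take j _"])
      qed
    qed
  qed
qed

lemma pstab_all:
  assumes "subgroup G (BijGroup Om)" "set L = Om"
  shows "pstab G L = {\<one>\<^bsub>BijGroup Om\<^esub>}"
proof
  show "pstab G L \<subseteq> {\<one>\<^bsub>BijGroup Om\<^esub>}"
  proof
    fix g assume g: "g \<in> pstab G L"
    then have gc: "g \<in> Bij Om" using assms(1) unfolding pstab_def subgroup_def BijGroup_def by auto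
    have "\<forall>x\<in>Om. g x = x" using g assms(2) unfolding pstab_def by auto
    then have "g = restrict id Om" using gc unfolding Bij_def extensional_def restrict_def by auto
    then show "g \<in> {\<one>\<^bsub>BijGroup Om\<^esub>}" by (simp add: BijGroup_def id_def)
  qed
next
  have "\<one>\<^bsub>BijGroup Om\<^esub> \<in> G" using assms(1) subgroup.one_closed by blast
  then show "{\<one>\<^bsub>BijGroup Om\<^esub>} \<subseteq> pstab G L"
    using assms(2) unfolding pstab_def by (auto simp: BijGroup_def)
qed

lemma irred_ext:
  assumes "subgroup G (BijGroup Om)" "set L = Om" "set p \<subseteq> Om"
    and "\<forall>i < length p. pstab G (take (Suc i) p) \<subset> pstab G (take i p)"
  shows "irredundant_base Om G (p @ ext (pstab G p) L)"
proof -
  let ?e = "ext (pstab G p) L"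
  have base: "is_base Om G (p @ ?e)"
    unfolding is_base_def
  proof
    show "set (p @ ?e) \<subseteq> Om" using assms(3) set_ext[of "pstab G p" L] assms(2) by auto
    have "pstab G (p @ ?e) = pstab (pstab G p) L" by (simp add: pstab_append pstab_ext)
    also have "\<dots> = pstab G (p @ L)" by (simp add: pstab_append)
    also have "\<dots> = {\<one>\<^bsub>BijGroup Om\<^esub>}" using pstab_all[of G Om "p @ L"] assms by auto
    finally show "pstab G (p @ ?e) = {\<one>\<^bsub>BijGroup Om\<^esub>}" .
  qed
  have "pstab G (take (Suc i) (p @ ?e)) \<subset> pstab G (take i (p @ ?e))" if i: "i < length (p @ ?e)" for i
  proof (cases "i < length p")
    case True
    then show ?thesis using assms(4) by simp
  next
    case False
    then have eq: "Suc i - length p = Suc (i - length p)" by simp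
    have "i - length p < length ?e" using i False by simp
    then have "pstab (pstab G p) (take (Suc (i - length p)) ?e) \<subset> pstab (pstab G p) (take (i - length p) ?e)"
      using ext_strict by blast
    then show ?thesis using False eq by (simp add: pstab_append)
  qed
  then show ?thesis using base unfolding irredundant_base_def by blast
qed

lemma nonIBIS_crit:
  assumes "subgroup G (BijGroup Om)" "finite Om"
    and "set pa \<subseteq> Om" "set pb \<subseteq> Om"
    and "pstab G pa = pstab G pb"
    and "\<forall>i < length pa. pstab G (take (Suc i) pa) \<subset> pstab G (take i pa)"
    and "\<forall>i < length pb. pstab G (take (Suc i) pb) \<subset> pstab G (take i pb)"
    and "length pa \<noteq> length pb"
  shows "\<not> IBIS Om G"
proof -
  obtain L where L: "set L = Om" using assms(2) finite_list by blast
  have a: "irredundant_base Om G (pa @ ext (pstab G pa) L)" using irred_ext assms L by blast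
  have b: "irredundant_base Om G (pb @ ext (pstab G pa) L)" using irred_ext[of G Om L pb] assms L by simp
  show ?thesis unfolding IBIS_def using a b assms(8) by fastforce
qed


definition dotp :: "'a::field^'n \<Rightarrow> 'a^'n \<Rightarrow> 'a" where
  "dotp x y = sum (\<lambda>j. x $ j * y $ j) UNIV"

lemma std_perp_dotp: "std_perp S = {x. \<forall>y\<in>S. dotp x y = 0}"
  by (simp add: std_perp_def dotp_def)

lemma dotp_comm: "dotp x y = dotp y x"
  by (simp add: dotp_def mult.commute)

lemma dotp_add_left: "dotp (x + z) y = dotp x y + dotp z y"
  by (simp add: dotp_def distrib_right sum.distrib)

lemma dotp_scale_left: "dotp (c *s x) y = c * dotp x y"
  by (simp add: dotp_def sum_distrib_left mult.assoc)

lemma dotp_zero_left[simp]: "dotp 0 y = 0"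
  by (simp add: dotp_def)

lemma dotp_axis: "dotp x (axis i 1) = x $ i"
proof -
  have "dotp x (axis i 1) = (\<Sum>j\<in>UNIV. if j = i then x $ j else 0)"
    unfolding dotp_def by (rule sum.cong) (auto simp: axis_def)
  then show ?thesis by simp
qed

lemma subspace_dotp_zero: "vec.subspace {y. dotp x y = 0}"
  unfolding vec.subspace_def
  by (auto simp: dotp_comm[of x] dotp_add_left dotp_scale_left)

lemma subspace_std_perp: "vec.subspace (std_perp S)"
  unfolding vec.subspace_def std_perp_dotp
  by (auto simp: dotp_add_left dotp_scale_left)

lemma std_perp_anti: "S \<subseteq> T \<Longrightarrow> std_perp T \<subseteq> std_perp S"
  unfolding std_perp_def by auto

lemma std_perp_perp_sup: "S \<subseteq> std_perp (std_perp S)"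
  unfolding std_perp_dotp by (auto simp: dotp_comm)

lemma std_perp_span: "std_perp (vec.span B) = std_perp B"
proof
  show "std_perp (vec.span B) \<subseteq> std_perp B"
    by (rule std_perp_anti) (rule vec.span_superset)
next
  show "std_perp B \<subseteq> std_perp (vec.span B)"
  proof
    fix x assume x: "x \<in> std_perp B"
    have "vec.span B \<subseteq> {y. dotp x y = 0}"
      by (rule vec.span_minimal) (use x subspace_dotp_zero in \<open>auto simp: std_perp_dotp\<close>)
    then show "x \<in> std_perp (vec.span B)" by (auto simp: std_perp_dotp)
  qed
qed

definition coord :: "'n set \<Rightarrow> ('a::field^'n) set" where
  "coord J = {x. \<forall>j. j \<notin> J \<longrightarrow> x $ j = 0}"

lemma subspace_coord: "vec.subspace (coord J)"
  unfolding vec.subspace_def coord_def by auto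

lemma axis_in_coord: "(axis i 1 :: 'a::field^'n) \<in> coord J \<longleftrightarrow> i \<in> J"
  unfolding coord_def axis_def by auto

lemma coord_mono: "J \<subseteq> J' \<Longrightarrow> coord J \<subseteq> coord J'"
  unfolding coord_def by auto

lemma dim_coord: "vec.dim (coord J :: ('a::field^'n::finite) set) = card J"
proof -
  let ?B = "(\<lambda>j. axis j (1::'a) :: 'a^'n) ` J"
  have ind: "vec.independent ?B"
    by (rule vec.independent_mono[OF independent_cart_basis]) (auto simp: cart_basis_def)
  have sub: "?B \<subseteq> coord J" by (auto simp: axis_in_coord)
  have sp: "coord J \<subseteq> vec.span ?B"
  proof
    fix x :: "'a^'n" assume x: "x \<in> coord J"
    have "x = (\<Sum>j\<in>J. x $ j *s axis j 1)"
    proof (subst vec_eq_iff, intro allI)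
      fix i
      have "(\<Sum>j\<in>J. x $ j *s axis j 1) $ i = (\<Sum>j\<in>J. if i = j then x $ j else 0)"
        unfolding sum_component by (rule sum.cong) (auto simp: axis_def)
      then show "x $ i = (\<Sum>j\<in>J. x $ j *s axis j 1) $ i"
        using x by (auto simp: coord_def)
    qed
    also have "\<dots> \<in> vec.span ?B"
      by (intro vec.span_sum vec.span_scale vec.span_base) auto
    finally show "x \<in> vec.span ?B" .
  qed
  have "card ?B = card J"
    by (rule card_image) (auto simp: inj_on_def axis_eq_axis)
  then show ?thesis using vec.basis_card_eq_dim[OF sub sp ind] by simp
qed

lemma dim_std_perp:
  fixes S :: "('a::field^'n::finite) set"
  assumes S: "vec.subspace S"
  shows "vec.dim (std_perp S) = CARD('n) - vec.dim S"
proof -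
  obtain B where B: "B \<subseteq> S" "vec.independent B" "S \<subseteq> vec.span B" "card B = vec.dim S"
    using vec.basis_exists by blast
  obtain C where C: "B \<subseteq> C" "vec.independent C" "UNIV \<subseteq> vec.span C"
    using vec.maximal_independent_subset_extend[of B UNIV] B(2) by auto
  have finC: "finite C" using C(2) vec.finiteI_independent by blast
  have cardC: "card C = CARD('n)"
    using vec.basis_card_eq_dim[of C UNIV] C vec_dim_card by auto
  obtain \<beta> where \<beta>: "bij_betw \<beta> (UNIV :: 'n set) C"
    using finite_same_card_bij[of "UNIV :: 'n set" C] finC cardC by auto
  define A :: "'a^'n^'n" where "A = (\<chi> j. \<beta> j)"
  have Ax: "(A *v x) $ j = dotp x (\<beta> j)" for x j
    by (simp add: A_def matrix_vector_mult_def dotp_def mult.commute)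
  have SB: "S = vec.span B"
    using B(1,3) vec.span_minimal[OF B(1) S] by auto
  have perpS: "std_perp S = std_perp B" using SB std_perp_span by metis
  have inj: "inj ((*v) A)"
    unfolding vec.inj_iff_eq_0
  proof (intro allI impI)
    fix x assume x0: "A *v x = 0"
    have "x \<in> std_perp C"
    proof -
      have "\<forall>c\<in>C. dotp x c = 0"
      proof
        fix c assume "c \<in> C"
        then obtain j where "c = \<beta> j" using \<beta> unfolding bij_betw_def by auto
        then show "dotp x c = 0" using x0 Ax[of x j] by simp
      qed
      then show ?thesis by (simp add: std_perp_dotp)
    qed
    then have "x \<in> std_perp (vec.span C)" by (simp add: std_perp_span)
    then have "\<forall>y. dotp x y = 0" using C(3) by (auto simp: std_perp_dotp)
    then show "x = 0" by (auto simp: vec_eq_iff dotp_axis[symmetric])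
  qed
  have surj: "surj ((*v) A)"
    using vec.linear_inj_imp_surj[OF matrix_vector_mul_linear_gen inj] .
  define I where "I = {j. \<beta> j \<in> B}"
  have cardI: "card I = card B"
  proof -
    have "\<beta> ` I = B" using \<beta> C(1) unfolding I_def bij_betw_def by auto
    moreover have "inj_on \<beta> I" using \<beta> unfolding bij_betw_def by (auto intro: inj_on_subset)
    ultimately show ?thesis using card_image by metis
  qed
  have img: "(*v) A ` std_perp S = coord (- I)"
  proof
    show "(*v) A ` std_perp S \<subseteq> coord (- I)"
      using B(1) by (auto simp: std_perp_dotp coord_def Ax I_def)
  next
    show "coord (- I) \<subseteq> (*v) A ` std_perp S"
    proof
      fix v :: "'a^'n" assume v: "v \<in> coord (- I)"
      obtain x where x: "v = A *v x" using surj by (metis surjD)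
      have "x \<in> std_perp B"
      proof -
        have "\<forall>b\<in>B. dotp x b = 0"
        proof
          fix b assume b: "b \<in> B"
          then obtain j where j: "b = \<beta> j" using \<beta> C(1) unfolding bij_betw_def by auto
          then have "j \<in> I" using b I_def by auto
          then show "dotp x b = 0" using v x j Ax[of x j] by (auto simp: coord_def)
        qed
        then show ?thesis by (simp add: std_perp_dotp)
      qed
      then show "v \<in> (*v) A ` std_perp S" using x perpS by auto
    qed
  qed
  have "vec.dim ((*v) A ` std_perp S) = vec.dim (std_perp S)"
    by (rule vec.dim_image_eq[OF matrix_vector_mul_linear_gen]) (use inj in \<open>auto intro: inj_on_subset\<close>)
  then have "vec.dim (std_perp S) = card (- I)" using img dim_coord by metis
  also have "\<dots> = CARD('n) - card I" using card_Diff_subset[of I UNIV] by (simp add: Compl_eq_Diff_UNIV)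
  finally show ?thesis using cardI B(4) by simp
qed

lemma dim_le_card: "vec.dim (S :: ('a::field^'n::finite) set) \<le> CARD('n)"
  using vec.dim_subset[of S UNIV] vec_dim_card by (metis subset_UNIV)

lemma std_perp_perp:
  fixes S :: "('a::field^'n::finite) set"
  assumes S: "vec.subspace S"
  shows "std_perp (std_perp S) = S"
proof -
  have "vec.dim (std_perp (std_perp S)) = vec.dim S"
    using dim_std_perp[OF S] dim_std_perp[OF subspace_std_perp, of S] dim_le_card[of S] by simp
  then show ?thesis
    using vec.subspace_dim_equal[OF S subspace_std_perp std_perp_perp_sup] by simp
qed


lemma semilinear_0:
  assumes "semilinear f" shows "f 0 = 0"
proof -
  have "f (0 + 0) = f 0 + f 0" using assms unfolding semilinear_def by blast
  then show ?thesis by simp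
qed

lemma field_aut_inv:
  assumes "field_aut s" shows "field_aut (inv_into UNIV s)"
proof -
  have b: "bij s" using assms field_aut_def by blast
  have add: "s (a + b) = s a + s b" "s (a * b) = s a * s b" for a b
    using assms field_aut_def by blast+
  have "inv_into UNIV s (a + b) = inv_into UNIV s a + inv_into UNIV s b" for a b
    by (metis add(1) b bij_inv_eq_iff)
  moreover have "inv_into UNIV s (a * b) = inv_into UNIV s a * inv_into UNIV s b" for a b
    by (metis add(2) b bij_inv_eq_iff)
  ultimately show ?thesis using b bij_imp_bij_inv unfolding field_aut_def by blast
qed

lemma semilinear_inv:
  assumes "semilinear f" shows "semilinear (inv_into UNIV f)"
proof -
  have b: "bij f" and add: "\<And>x y. f (x + y) = f x + f y" using assms semilinear_def by blast+
  obtain s where s: "field_aut s" "\<And>c x. f (c *s x) = s c *s f x" using assms semilinear_def by blast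
  have bs: "bij s" using s(1) field_aut_def by blast
  have "inv_into UNIV f (x + y) = inv_into UNIV f x + inv_into UNIV f y" for x y
    by (metis add b bij_inv_eq_iff)
  moreover have "inv_into UNIV f (c *s x) = inv_into UNIV s c *s inv_into UNIV f x" for c x
  proof -
    have "f (inv_into UNIV s c *s inv_into UNIV f x) = c *s x"
      proof -
      have "f (inv_into UNIV s c *s inv_into UNIV f x) = s (inv_into UNIV s c) *s f (inv_into UNIV f x)"
        using s(2) by blast
      also have "\<dots> = c *s x" using bs b by (simp add: bij_is_surj surj_f_inv_f)
      finally show ?thesis .
    qed
    then show ?thesis by (metis b bij_inv_eq_iff)
  qed
  ultimately show ?thesis using b bij_imp_bij_inv field_aut_inv[OF s(1)] unfolding semilinear_def by blast
qed

lemma semilinear_span_sub: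
  assumes "semilinear f" shows "f ` vec.span Y \<subseteq> vec.span (f ` Y)"
proof -
  have add: "\<And>x y. f (x + y) = f x + f y" using assms semilinear_def by blast
  obtain s where s: "field_aut s" "\<And>c x. f (c *s x) = s c *s f x" using assms semilinear_def by blast
  have "vec.span Y \<subseteq> {x. f x \<in> vec.span (f ` Y)}"
  proof (rule vec.span_minimal)
    show "Y \<subseteq> {x. f x \<in> vec.span (f ` Y)}" by (auto intro: vec.span_base)
    show "vec.subspace {x. f x \<in> vec.span (f ` Y)}"
      unfolding vec.subspace_def
      by (auto simp: semilinear_0[OF assms] add s(2) vec.span_zero vec.span_add vec.span_scale)
  qed
  then show ?thesis by auto
qed

lemma semilinear_span:
  assumes "semilinear f" shows "f ` vec.span Y = vec.span (f ` Y)"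
proof
  show "f ` vec.span Y \<subseteq> vec.span (f ` Y)" using semilinear_span_sub[OF assms] .
  have b: "bij f" using assms semilinear_def by blast
  have "inv_into UNIV f ` vec.span (f ` Y) \<subseteq> vec.span (inv_into UNIV f ` f ` Y)"
    using semilinear_span_sub[OF semilinear_inv[OF assms]] .
  also have "inv_into UNIV f ` f ` Y = Y" using b by (simp add: bij_is_inj image_inv_f_f)
  finally have "f ` inv_into UNIV f ` vec.span (f ` Y) \<subseteq> f ` vec.span Y" by blast
  then show "vec.span (f ` Y) \<subseteq> f ` vec.span Y" using b by (simp add: bij_is_surj image_f_inv_f)
qed

lemma semilinear_subspace:
  assumes "semilinear f" "vec.subspace S" shows "vec.subspace (f ` S)"
proof -
  have "f ` S = vec.span (f ` S)" using semilinear_span[OF assms(1), of S] vec.span_eq_iff assms(2) by metis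
  then show ?thesis by (metis vec.subspace_span)
qed

lemma semilinear_indep:
  assumes "semilinear f" "vec.independent B" shows "vec.independent (f ` B)"
proof
  assume "vec.dependent (f ` B)"
  then obtain b where b: "b \<in> B" "f b \<in> vec.span (f ` B - {f b})"
    unfolding vec.dependent_def by auto
  have b1: "bij f" using assms semilinear_def by blast
  have "f ` B - {f b} = f ` (B - {b})" using b1 by (auto simp: bij_def inj_on_def)
  then have "f b \<in> f ` vec.span (B - {b})" using b semilinear_span[OF assms(1)] by metis
  then have "b \<in> vec.span (B - {b})" using b1 by (auto simp: bij_def inj_on_def)
  then show False using assms(2) b(1) unfolding vec.dependent_def by blast
qed

lemma semilinear_dim:
  assumes "semilinear f" shows "vec.dim (f ` S) = vec.dim S"
proof -
  obtain B where B: "B \<subseteq> S" "vec.independent B" "S \<subseteq> vec.span B" "card B = vec.dim S"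
    using vec.basis_exists by blast
  have b1: "bij f" using assms semilinear_def by blast
  have "card (f ` B) = card B" using b1 by (metis bij_betw_imp_inj_on card_image inj_on_subset subset_UNIV)
  moreover have "f ` S \<subseteq> vec.span (f ` B)" using B(3) semilinear_span[OF assms, of B] by blast
  ultimately show ?thesis
    using vec.basis_card_eq_dim[of "f ` B" "f ` S"] B semilinear_indep[OF assms B(2)] by (metis image_mono)
qed


lemma flags2_ex:
  fixes a :: "('a::{field,finite}^'n) set set"
  assumes "a \<in> (flags2 k :: ('a^'n) set set set)"
  shows "\<exists>W U. a = {W, U} \<and> vec.subspace W \<and> vec.subspace U \<and> vec.dim W = k \<and>
    vec.dim U = CARD('n) - k \<and> W \<subseteq> U"
  using assms unfolding flags2_def by blast

lemma flags2_I:
  fixes W :: "('a::{field,finite}^'n) set"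
  assumes "vec.subspace W" "vec.subspace U" "vec.dim W = k" "vec.dim U = CARD('n) - k" "W \<subseteq> U"
  shows "{W, U} \<in> flags2 k"
  using assms unfolding flags2_def by blast

lemma finite_flags2: "finite (flags2 k :: ('a::{field,finite}^'n) set set set)"
  by (rule finite_subset[OF subset_UNIV]) simp

lemma sl_maps:
  fixes f :: "'a::{field,finite}^'n \<Rightarrow> 'a^'n"
  assumes f: "semilinear f" and a: "a \<in> flags2 k"
  shows "(\<lambda>S. f ` S) ` a \<in> flags2 k"
proof -
  obtain W U where WU: "a = {W, U}" "vec.subspace W" "vec.subspace U" "vec.dim W = k"
    "vec.dim U = CARD('n) - k" "W \<subseteq> U" using flags2_ex[OF a] by blast
  have "{f ` W, f ` U} \<in> flags2 k"
  proof (rule flags2_I)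
    show "vec.subspace (f ` W)" using semilinear_subspace[OF f WU(2)] .
    show "vec.subspace (f ` U)" using semilinear_subspace[OF f WU(3)] .
    show "vec.dim (f ` W) = k" using semilinear_dim[OF f, of W] WU(4) by simp
    show "vec.dim (f ` U) = CARD('n) - k" using semilinear_dim[OF f, of U] WU(5) by simp
    show "f ` W \<subseteq> f ` U" using WU(6) by (rule image_mono)
  qed
  then show ?thesis using WU by simp
qed

lemma sl_in_Bij:
  fixes f :: "'a::{field,finite}^'n \<Rightarrow> 'a^'n"
  assumes f: "semilinear f"
  shows "induced (\<lambda>S. f ` S) (flags2 k) \<in> Bij (flags2 k :: ('a::{field,finite}^'n) set set set)"
proof -
  let ?Om = "flags2 k :: ('a^'n) set set set"
  let ?g = "inv_into UNIV f"
  have b: "bij f" using f semilinear_def by blast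
  have gf: "(\<lambda>S. ?g ` S) ` ((\<lambda>S. f ` S) ` a) = a" for a :: "('a^'n) set set"
    using b by (auto simp: image_comp bij_is_inj image_inv_f_f)
  have fgx: "f (?g x) = x" for x using b by (simp add: bij_is_surj surj_f_inv_f)
  have fgS: "f ` ?g ` S = S" for S using fgx by (simp add: image_comp)
  have fg: "(\<lambda>S. f ` S) ` ((\<lambda>S. ?g ` S) ` a) = a" for a :: "('a^'n) set set"
    using fgS by (simp add: image_comp)
  have "bij_betw (induced (\<lambda>S. f ` S) ?Om) ?Om ?Om"
  proof (rule bij_betw_byWitness[where f'="induced (\<lambda>S. ?g ` S) ?Om"])
    show "\<forall>a\<in>?Om. induced (\<lambda>S. ?g ` S) ?Om (induced (\<lambda>S. f ` S) ?Om a) = a"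
      using sl_maps[OF f] gf by (simp add: induced_def)
    show "\<forall>a\<in>?Om. induced (\<lambda>S. f ` S) ?Om (induced (\<lambda>S. ?g ` S) ?Om a) = a"
      using sl_maps[OF semilinear_inv[OF f]] fg by (simp add: induced_def)
    show "induced (\<lambda>S. f ` S) ?Om ` ?Om \<subseteq> ?Om"
      using sl_maps[OF f] by (auto simp: induced_def)
    show "induced (\<lambda>S. ?g ` S) ?Om ` ?Om \<subseteq> ?Om"
      using sl_maps[OF semilinear_inv[OF f]] by (auto simp: induced_def)
  qed
  then show ?thesis unfolding Bij_def induced_def by auto
qed

lemma perp_maps:
  fixes a :: "('a::{field,finite}^'n) set set"
  assumes a: "a \<in> flags2 k" and k: "k \<le> CARD('n)"
  shows "std_perp ` a \<in> flags2 k"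
proof -
  obtain W U where WU: "a = {W, U}" "vec.subspace W" "vec.subspace U" "vec.dim W = k"
    "vec.dim U = CARD('n) - k" "W \<subseteq> U" using flags2_ex[OF a] by blast
  have d1: "vec.dim (std_perp U) = k" using dim_std_perp[OF WU(3)] WU(5) k by simp
  have d2: "vec.dim (std_perp W) = CARD('n) - k" using dim_std_perp[OF WU(2)] WU(4) by simp
  have "{std_perp U, std_perp W} \<in> flags2 k"
  proof (rule flags2_I)
    show "vec.subspace (std_perp U)" "vec.subspace (std_perp W)" by (rule subspace_std_perp)+
    show "vec.dim (std_perp U) = k" by (rule d1)
    show "vec.dim (std_perp W) = CARD('n) - k" by (rule d2)
    show "std_perp U \<subseteq> std_perp W" using WU(6) by (rule std_perp_anti)
  qed
  then show ?thesis using WU by (simp add: insert_commute)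
qed

lemma perp_invol:
  fixes a :: "('a::{field,finite}^'n) set set"
  assumes a: "a \<in> flags2 k"
  shows "std_perp ` std_perp ` a = a"
proof -
  obtain W U where WU: "a = {W, U}" "vec.subspace W" "vec.subspace U"
    using flags2_ex[OF a] by blast
  then show ?thesis by (simp add: std_perp_perp)
qed

lemma iota_in_Bij:
  assumes k: "k \<le> CARD('n)"
  shows "iota_perm k \<in> Bij (flags2 k :: ('a::{field,finite}^'n) set set set)"
proof -
  let ?Om = "flags2 k :: ('a^'n) set set set"
  have "bij_betw (iota_perm k) ?Om ?Om"
  proof (rule bij_betw_byWitness[where f'="iota_perm k"])
    show "\<forall>a\<in>?Om. iota_perm k (iota_perm k a) = a"
    proof
      fix a assume a: "a \<in> ?Om"
      have "std_perp ` a \<in> ?Om" using perp_maps[OF a k] .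
      then show "iota_perm k (iota_perm k a) = a"
        using a perp_invol[OF a] by (simp add: iota_perm_def induced_def)
    qed
    then show "\<forall>a\<in>?Om. iota_perm k (iota_perm k a) = a" .
    show "iota_perm k ` ?Om \<subseteq> ?Om"
      using perp_maps[OF _ k] by (auto simp: induced_def iota_perm_def)
    then show "iota_perm k ` ?Om \<subseteq> ?Om" .
  qed
  then show ?thesis unfolding Bij_def iota_perm_def induced_def by auto
qed

definition Fwd :: "'b set set \<Rightarrow> ('b set \<Rightarrow> 'b set) \<Rightarrow> bool" where
  "Fwd Om g \<longleftrightarrow> (\<forall>a\<in>Om. \<forall>b\<in>Om. a \<inter> b \<noteq> {} \<longrightarrow> g a \<inter> g b \<noteq> {})"

lemma Fwd_induced: "Fwd Om (induced h Om)"
  unfolding Fwd_def induced_def by auto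

lemma Fwd_bwd:
  assumes fin: "finite Om" and h: "bij_betw h Om Om" and F: "Fwd Om h"
    and ab: "a \<in> Om" "b \<in> Om" "h a \<inter> h b \<noteq> {}"
  shows "a \<inter> b \<noteq> {}"
proof -
  define Rel where "Rel = {(a, b). a \<in> Om \<and> b \<in> Om \<and> a \<inter> b \<noteq> {}}"
  define F2 where "F2 = (\<lambda>(a, b). (h a, h b))"
  have F2a: "F2 (x, y) = (h x, h y)" for x y unfolding F2_def by simp
  have injh: "inj_on h Om" using h by (rule bij_betw_imp_inj_on)
  have hOm: "h x \<in> Om" if "x \<in> Om" for x using bij_betwE[OF h] that by blast
  have Rel_iff: "(x, y) \<in> Rel \<longleftrightarrow> x \<in> Om \<and> y \<in> Om \<and> x \<inter> y \<noteq> {}" for x y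
    unfolding Rel_def by simp
  have finR: "finite Rel"
  proof (rule finite_subset[of _ "Om \<times> Om"])
    show "Rel \<subseteq> Om \<times> Om" unfolding Rel_def by blast
    show "finite (Om \<times> Om)" using fin by simp
  qed
  have sub: "F2 ` Rel \<subseteq> Rel"
  proof
    fix z assume "z \<in> F2 ` Rel"
    then obtain w where w: "w \<in> Rel" "z = F2 w" by blast
    obtain x y where xy: "w = (x, y)" by (cases w)
    have "x \<in> Om" "y \<in> Om" "x \<inter> y \<noteq> {}" using w(1) xy Rel_iff by auto
    then have "h x \<in> Om" "h y \<in> Om" "h x \<inter> h y \<noteq> {}" using hOm F unfolding Fwd_def by blast+
    then show "z \<in> Rel" using w(2) xy F2a Rel_iff by simp
  qed
  have inj: "inj_on F2 Rel"
  proof (rule inj_onI)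
    fix u v assume u: "u \<in> Rel" and v: "v \<in> Rel" and e: "F2 u = F2 v"
    obtain x y where xy: "u = (x, y)" by (cases u)
    obtain x' y' where xy': "v = (x', y')" by (cases v)
    have "x \<in> Om" "y \<in> Om" "x' \<in> Om" "y' \<in> Om" using u v xy xy' Rel_iff by auto
    moreover have "h x = h x'" "h y = h y'" using e xy xy' F2a by auto
    ultimately have "x = x'" "y = y'" using injh unfolding inj_on_def by blast+
    then show "u = v" using xy xy' by simp
  qed
  have eq: "F2 ` Rel = Rel" using endo_inj_surj[OF finR sub inj] .
  have "(h a, h b) \<in> Rel" using ab hOm Rel_iff by simp
  then have "F2 (a, b) \<in> F2 ` Rel" using eq F2a by simp
  then obtain w where w: "w \<in> Rel" "F2 w = F2 (a, b)" by (metis imageE)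
  obtain x y where xy: "w = (x, y)" by (cases w)
  have "x \<in> Om" "y \<in> Om" using w(1) xy Rel_iff by auto
  moreover have "h x = h a" "h y = h b" using w(2) xy F2a by auto
  ultimately have "x = a" "y = b" using injh ab unfolding inj_on_def by blast+
  then have "(a, b) \<in> Rel" using w(1) xy by simp
  then show ?thesis using Rel_iff by simp
qed

lemma Fwd_inv:
  assumes fin: "finite Om" and h: "h \<in> Bij Om" and F: "Fwd Om h"
  shows "Fwd Om (inv\<^bsub>BijGroup Om\<^esub> h)"
proof -
  have hb: "bij_betw h Om Om" using h Bij_def by auto
  show ?thesis
    unfolding Fwd_def inv_BijGroup[OF h]
  proof (intro ballI impI)
    fix a b assume a: "a \<in> Om" and b: "b \<in> Om" and ab: "a \<inter> b \<noteq> {}"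
    let ?a = "inv_into Om h a" and ?b = "inv_into Om h b"
    have ia: "?a \<in> Om" "h ?a = a" using a hb by (auto simp: bij_betw_def inv_into_into f_inv_into_f)
    have ib: "?b \<in> Om" "h ?b = b" using b hb by (auto simp: bij_betw_def inv_into_into f_inv_into_f)
    have "?a \<inter> ?b \<noteq> {}" using Fwd_bwd[OF fin hb F ia(1) ib(1)] ia ib ab by simp
    then show "(\<lambda>x\<in>Om. inv_into Om h x) a \<inter> (\<lambda>x\<in>Om. inv_into Om h x) b \<noteq> {}" using a b by simp
  qed
qed

lemma Fwd_generate:
  assumes fin: "finite Om" and gens: "H \<subseteq> Bij Om" and F: "\<forall>h\<in>H. Fwd Om h"
    and g: "g \<in> generate (BijGroup Om) H"
  shows "Fwd Om g"
  using g
proof (induction rule: generate.induct)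
  case one
  then show ?case by (simp add: BijGroup_def Fwd_def)
next
  case (incl h)
  then show ?case using F by simp
next
  case (inv h)
  have hB: "h \<in> Bij Om" using inv gens by blast
  have "Fwd Om h" using inv F by blast
  then show ?case using Fwd_inv[OF fin hB] by simp
next
  case (eng h1 h2)
  have cb: "carrier (BijGroup Om) = Bij Om" by (simp add: BijGroup_def)
  have c1: "h1 \<in> Bij Om"
    using group.generate_in_carrier[OF group_BijGroup, of H Om h1] gens eng(1) cb by simp
  have c2: "h2 \<in> Bij Om"
    using group.generate_in_carrier[OF group_BijGroup, of H Om h2] gens eng(2) cb by simp
  have m: "h1 \<otimes>\<^bsub>BijGroup Om\<^esub> h2 = compose Om h1 h2"
    using c1 c2 by (simp add: BijGroup_def)
  have h2in: "h2 a \<in> Om" if "a \<in> Om" for a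
    using that c2 unfolding Bij_def bij_betw_def by auto
  show ?case
    unfolding Fwd_def m
  proof (intro ballI impI)
    fix a b assume a: "a \<in> Om" and b: "b \<in> Om" and ab: "a \<inter> b \<noteq> {}"
    have "h2 a \<inter> h2 b \<noteq> {}" using eng(4) a b ab unfolding Fwd_def by blast
    then have "h1 (h2 a) \<inter> h1 (h2 b) \<noteq> {}" using eng(3) h2in[OF a] h2in[OF b] unfolding Fwd_def by blast
    then show "compose Om h1 h2 a \<inter> compose Om h1 h2 b \<noteq> {}" using a b by (simp add: compose_eq)
  qed
qed


definition tv :: "'n::finite \<Rightarrow> 'n \<Rightarrow> 'a::field^'n^'n" where
  "tv i j = (\<chi> r c. (if r = c then 1 else 0) + (if r = i \<and> c = j then 1 else 0))"

lemma tv_apply: "tv i j *v x = x + x $ j *s axis i (1::'a::field)"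
proof (subst vec_eq_iff, intro allI)
  fix l
  have "(tv i j *v x) $ l = (\<Sum>c\<in>UNIV. ((if l = c then 1 else 0) + (if l = i \<and> c = j then 1 else 0)) * x $ c)"
    unfolding matrix_vector_mult_def tv_def by (simp only: vec_lambda_beta)
  also have "\<dots> = (\<Sum>c\<in>UNIV. (if l = c then x $ c else 0) + (if l = i \<and> c = j then x $ c else 0))"
    by (intro sum.cong refl) (auto simp: distrib_right)
  also have "\<dots> = (\<Sum>c\<in>UNIV. if l = c then x $ c else 0) + (\<Sum>c\<in>UNIV. if l = i \<and> c = j then x $ c else 0)"
    by (rule sum.distrib)
  also have "\<dots> = x $ l + (if l = i then x $ j else 0)"
    by (cases "l = i") simp_all
  also have "\<dots> = (x + x $ j *s axis i 1) $ l" by (simp add: axis_def)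
  finally show "(tv i j *v x) $ l = (x + x $ j *s axis i 1) $ l" .
qed

lemma det_tv:
  assumes ij: "i \<noteq> j"
  shows "det (tv i j :: 'a::field^'n::finite^'n) = 1"
proof -
  let ?I = "mat 1 :: 'a^'n^'n"
  have "tv i j = (\<chi> k. if k = i then row i ?I + 1 *s row j ?I else row k ?I)"
    by (simp add: vec_eq_iff tv_def row_def mat_def)
  then show ?thesis using det_row_operation[OF ij, of "mat 1 :: 'a^'n^'n" 1] by simp
qed

definition tmap :: "'n \<Rightarrow> 'n \<Rightarrow> 'a::field^'n \<Rightarrow> 'a^'n" where
  "tmap i j x = x + x $ j *s axis i 1"

lemma tv_tmap: "(\<lambda>x. tv i j *v x) = tmap i j"
  by (simp add: tv_apply tmap_def fun_eq_iff)

lemma tmap_inj: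
  assumes ij: "i \<noteq> j"
  shows "inj (tmap i j :: 'a::field^'n::finite \<Rightarrow> _)"
proof (rule injI)
  fix x y :: "'a^'n" assume e: "tmap i j x = tmap i j y"
  then have "(tmap i j x) $ j = (tmap i j y) $ j" by simp
  then have xj: "x $ j = y $ j" using ij by (simp add: tmap_def axis_def)
  then show "x = y" using e by (simp add: tmap_def)
qed

lemma tmap_coord:
  assumes ij: "i \<noteq> j" and J: "j \<notin> J \<or> i \<in> J"
  shows "tmap i j ` coord J = (coord J :: ('a::{field,finite}^'n::finite) set)"
proof (rule endo_inj_surj)
  show "finite (coord J :: ('a^'n) set)" by (rule finite_subset[OF subset_UNIV]) simp
  show "inj_on (tmap i j) (coord J :: ('a^'n) set)" using tmap_inj[OF ij] by (rule inj_on_subset) simp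
  show "tmap i j ` coord J \<subseteq> (coord J :: ('a^'n) set)"
  proof
    fix y assume "y \<in> tmap i j ` (coord J :: ('a^'n) set)"
    then obtain x where x: "x \<in> coord J" "y = tmap i j x" by blast
    have "y $ l = 0" if l: "l \<notin> J" for l
    proof (cases "l = i")
      case True
      then have "x $ j = 0" using J l x(1) by (auto simp: coord_def)
      then show ?thesis using x l by (simp add: tmap_def coord_def axis_def)
    next
      case False
      then show ?thesis using x l by (simp add: tmap_def coord_def axis_def)
    qed
    then show "y \<in> coord J" by (simp add: coord_def)
  qed
qed

lemma tmap_axis_j:
  assumes "i \<noteq> j" shows "tmap i j (axis j 1) = axis j 1 + axis i (1::'a::field)"
  using assms by (simp add: tmap_def axis_def)

lemma tmap_axis_other:
  assumes "l \<noteq> j" shows "tmap i j (axis l 1) = axis l (1::'a::field)"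
  using assms by (simp add: tmap_def axis_def)

lemma sum_axis_coord:
  assumes "i \<noteq> j"
  shows "(axis j 1 + axis i (1::'a::field) :: 'a^'n) \<in> coord J \<longleftrightarrow> i \<in> J \<and> j \<in> J"
proof
  assume h: "(axis j 1 + axis i 1 :: 'a^'n) \<in> coord J"
  have "(axis j 1 + axis i 1 :: 'a^'n) $ i = 1" "(axis j 1 + axis i 1 :: 'a^'n) $ j = 1"
    using assms by (auto simp: axis_def)
  then show "i \<in> J \<and> j \<in> J" using h unfolding coord_def by force
next
  assume "i \<in> J \<and> j \<in> J"
  then show "(axis j 1 + axis i 1 :: 'a^'n) \<in> coord J" by (auto simp: coord_def axis_def)
qed


definition psl :: "'n::finite \<Rightarrow> 'n \<Rightarrow> nat \<Rightarrow> (('a::{field,finite}^'n) set set \<Rightarrow> ('a^'n) set set)" where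
  "psl i j k = induced (\<lambda>S. (\<lambda>x. tv i j *v x) ` S) (flags2 k)"

lemma psl_in: "i \<noteq> j \<Longrightarrow> (psl i j k :: ('a::{field,finite}^'n::finite) set set \<Rightarrow> _) \<in> PSL_perms k"
  unfolding psl_def PSL_perms_def using det_tv by blast

lemma psl_apply:
  "a \<in> flags2 k \<Longrightarrow> (psl i j k a :: ('a::{field,finite}^'n::finite) set set) = (\<lambda>S. tmap i j ` S) ` a"
  by (simp add: psl_def induced_def tv_tmap)

lemma psl_fix:
  fixes A B :: "('a::{field,finite}^'n::finite) set"
  assumes "{A, B} \<in> flags2 k" "tmap i j ` A = A" "tmap i j ` B = B"
  shows "psl i j k {A, B} = {A, B}"
  using assms by (simp add: psl_apply)

lemma psl_move:
  fixes A B :: "('a::{field,finite}^'n::finite) set"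
  assumes "{A, B} \<in> flags2 k" "tmap i j ` A \<notin> {A, B} \<or> tmap i j ` B \<notin> {A, B}"
  shows "psl i j k {A, B} \<noteq> {A, B}"
proof
  assume e: "psl i j k {A, B} = {A, B}"
  have "psl i j k {A, B} = {tmap i j ` A, tmap i j ` B}" using assms(1) by (simp add: psl_apply)
  then show False using e assms(2) by auto
qed

lemma strict_step:
  assumes "g \<in> G" "\<forall>z\<in>set xs. g z = z" "g x \<noteq> x"
  shows "pstab G (xs @ [x]) \<subset> pstab G xs"
  using assms unfolding pstab_def by auto

lemma not_in_image_inj:
  assumes "inj f" "v \<notin> A" shows "f v \<notin> f ` A"
  using assms by (auto simp: inj_def)

lemma img_not_in: "v \<in> f ` A \<Longrightarrow> v \<notin> A \<Longrightarrow> v \<notin> B \<Longrightarrow> f ` A \<notin> {A, B}"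
  by auto

lemma move_helper:
  assumes ij: "i \<noteq> j" and "j \<in> JA" "i \<notin> JA" "i \<notin> JB \<or> j \<notin> JB"
  shows "tmap i j ` coord JA \<notin> {coord JA, coord JB :: ('a::{field,finite}^'n::finite) set}"
proof (rule img_not_in)
  let ?v = "axis j 1 + axis i 1 :: 'a^'n"
  have "(axis j 1 :: 'a^'n) \<in> coord JA" using assms(2) by (simp add: axis_in_coord)
  then have "tmap i j (axis j 1 :: 'a^'n) \<in> tmap i j ` coord JA" by (rule imageI)
  moreover have "tmap i j (axis j 1 :: 'a^'n) = ?v" by (rule tmap_axis_j[OF ij])
  ultimately show "?v \<in> tmap i j ` coord JA" by simp
  show "?v \<notin> coord JA" using sum_axis_coord[OF ij, of JA] assms(3) by simp
  show "?v \<notin> coord JB" using sum_axis_coord[OF ij, of JB] assms(4) by blast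
qed

theorem lemma3p6:
  fixes G :: "(('a::{field,finite}^'n) set set \<Rightarrow> ('a^'n) set set) set"
    and k :: nat
  assumes "CARD('n) \<ge> 3"
    and "1 \<le> k" and "2 * k < CARD('n)"
    and "subgroup G (BijGroup (flags2 k :: ('a^'n) set set set))"
    and "PSL_perms k \<subseteq> G"
    and "PSL_perms k \<lhd> (BijGroup (flags2 k :: ('a^'n) set set set))\<lparr>carrier := G\<rparr>"
    and "G \<subseteq> Aut_perms k"
    and "\<not> G \<subseteq> PGammaL_perms k"
  shows "\<not> IBIS (flags2 k :: ('a^'n) set set set) G"
proof -
  let ?Om = "flags2 k :: ('a^'n) set set set"
  define d where "d = CARD('n)"
  have k1: "1 \<le> k" and kd: "2 * k < d" using assms(2,3) d_def by auto
  have fin: "finite ?Om" by (rule finite_flags2)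
  have sub: "subgroup G (BijGroup ?Om)" by (rule assms(4))
  have GB: "G \<subseteq> Bij ?Om" using subgroup.subset[OF sub] by (simp add: BijGroup_def)
  \<comment> \<open>every element of G preserves the relation of sharing a component\<close>
  have gensB: "insert (iota_perm k) (PGammaL_perms k) \<subseteq> Bij ?Om"
  proof
    fix h assume "h \<in> insert (iota_perm k) (PGammaL_perms k :: (('a^'n) set set \<Rightarrow> _) set)"
    then show "h \<in> Bij ?Om"
    proof
      assume "h = iota_perm k"
      have "k \<le> CARD('n)" using kd d_def by simp
      then have "iota_perm k \<in> Bij ?Om" by (rule iota_in_Bij)
      then show ?thesis using \<open>h = iota_perm k\<close> by simp
    next
      assume "h \<in> PGammaL_perms k"
      then obtain f :: "'a^'n \<Rightarrow> 'a^'n" where "semilinear f" "h = induced (\<lambda>S. f ` S) ?Om"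
        unfolding PGammaL_perms_def by blast
      then show ?thesis using sl_in_Bij by blast
    qed
  qed
  have gensF: "\<forall>h\<in>insert (iota_perm k) (PGammaL_perms k :: (('a^'n) set set \<Rightarrow> _) set). Fwd ?Om h"
  proof
    fix h assume "h \<in> insert (iota_perm k) (PGammaL_perms k :: (('a^'n) set set \<Rightarrow> _) set)"
    then show "Fwd ?Om h"
    proof
      assume "h = iota_perm k"
      then show ?thesis by (simp add: iota_perm_def Fwd_induced)
    next
      assume "h \<in> PGammaL_perms k"
      then obtain f :: "'a^'n \<Rightarrow> 'a^'n" where "h = induced (\<lambda>S. f ` S) ?Om"
        unfolding PGammaL_perms_def by blast
      then show ?thesis by (simp add: Fwd_induced)
    qed
  qed
  have GF: "Fwd ?Om g" if "g \<in> G" for g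
    using Fwd_generate[OF fin gensB gensF] that assms(7) unfolding Aut_perms_def by blast
  obtain \<nu> where \<nu>: "bij_betw \<nu> {0..<d} (UNIV :: 'n set)"
    using ex_bij_betw_nat_finite[of "UNIV :: 'n set"] d_def by auto
  have injnu: "inj_on \<nu> {0..<d}" using \<nu> bij_betw_imp_inj_on by blast
  have nu_eq: "\<nu> x = \<nu> y \<longleftrightarrow> x = y" if "x < d" "y < d" for x y
    using injnu that unfolding inj_on_def by auto
  have nu_mem: "\<nu> x \<in> \<nu> ` S \<longleftrightarrow> x \<in> S" if "x < d" "S \<subseteq> {0..<d}" for x S
    using inj_on_image_mem_iff[OF injnu] that by auto
  define a where "a = \<nu> 0"
  define p where "p = \<nu> 1"
  define r where "r = \<nu> 2"
  define K0 where "K0 = \<nu> ` {3..<k+2}"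
  define Xr where "Xr = \<nu> ` {k+2..<2*k+1}"
  have d3: "3 \<le> d" using kd k1 by simp
  have ap: "a \<noteq> p" and ar: "a \<noteq> r" and pr: "p \<noteq> r"
    using nu_eq d3 unfolding a_def p_def r_def by auto
  have aK: "a \<notin> K0" and pK: "p \<notin> K0" and rK: "r \<notin> K0"
    using nu_mem d3 kd unfolding a_def p_def r_def K0_def by auto
  have aX: "a \<notin> Xr" and pX: "p \<notin> Xr" and rX: "r \<notin> Xr"
    using nu_mem d3 kd unfolding a_def p_def r_def Xr_def by auto
  have KX: "K0 \<inter> Xr = {}"
  proof -
    have "\<nu> ` {3..<k+2} \<inter> \<nu> ` {k+2..<2*k+1} = \<nu> ` ({3..<k+2} \<inter> {k+2..<2*k+1})"
      by (rule inj_on_image_Int[OF injnu, symmetric]) (use kd in auto)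
    then show ?thesis unfolding K0_def Xr_def by auto
  qed
  have cK: "card K0 = k - 1"
    unfolding K0_def by (subst card_image) (use kd in \<open>auto intro: inj_on_subset[OF injnu]\<close>)
  have cX: "card Xr = k - 1"
    unfolding Xr_def by (subst card_image) (use kd in \<open>auto intro: inj_on_subset[OF injnu]\<close>)
  define JW where "JW = insert a K0"
  define JW' where "JW' = insert p K0"
  define JU where "JU = - insert r Xr"
  define JU' where "JU' = - insert p Xr"
  have cJW: "card JW = k" using cK aK k1 unfolding JW_def by simp
  have cJW': "card JW' = k" using cK pK k1 unfolding JW'_def by simp
  have cins: "card (insert r Xr) = k" "card (insert p Xr) = k" using cX rX pX k1 by simp_all
  have cJU: "card JU = d - k"
    unfolding JU_def d_def using card_Diff_subset[of "insert r Xr" UNIV] cins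
    by (simp add: Compl_eq_Diff_UNIV)
  have cJU': "card JU' = d - k"
    unfolding JU'_def d_def using card_Diff_subset[of "insert p Xr" UNIV] cins
    by (simp add: Compl_eq_Diff_UNIV)
  define W :: "('a^'n) set" where "W = coord JW"
  define W' :: "('a^'n) set" where "W' = coord JW'"
  define U :: "('a^'n) set" where "U = coord JU"
  define U' :: "('a^'n) set" where "U' = coord JU'"
  have dW: "vec.dim W = k" "vec.dim W' = k" "vec.dim U = d - k" "vec.dim U' = d - k"
    unfolding W_def W'_def U_def U'_def by (simp_all only: dim_coord cJW cJW' cJU cJU')
  have sW: "vec.subspace W" "vec.subspace W'" "vec.subspace U" "vec.subspace U'"
    unfolding W_def W'_def U_def U'_def by (rule subspace_coord)+
  have JWU: "JW \<subseteq> JU" "JW \<subseteq> JU'" "JW' \<subseteq> JU"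
    using ar aX KX rK pr pX ap pK unfolding JW_def JW'_def JU_def JU'_def by auto
  have WU: "W \<subseteq> U" "W \<subseteq> U'" "W' \<subseteq> U"
    unfolding W_def W'_def U_def U'_def using coord_mono JWU by blast+
  define y where "y = {W, U}"
  define x1 where "x1 = {W, U'}"
  define x2 where "x2 = {W', U}"
  have dW2: "vec.dim U = CARD('n) - k" "vec.dim U' = CARD('n) - k" using dW d_def by simp_all
  have yO: "y \<in> ?Om" unfolding y_def by (rule flags2_I[OF sW(1) sW(3) dW(1) dW2(1) WU(1)])
  have x1O: "x1 \<in> ?Om" unfolding x1_def by (rule flags2_I[OF sW(1) sW(4) dW(1) dW2(2) WU(2)])
  have x2O: "x2 \<in> ?Om" unfolding x2_def by (rule flags2_I[OF sW(2) sW(3) dW(2) dW2(1) WU(3)])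
  have m: "a \<in> JW" "p \<notin> JW" "r \<notin> JW" "p \<in> JW'" "a \<notin> JW'"
          "a \<in> JU" "p \<in> JU" "r \<notin> JU" "r \<in> JU'" "p \<notin> JU'"
    using ap ar pr aK pK rK aX pX rX unfolding JW_def JW'_def JU_def JU'_def by auto
  have ax: "(axis l 1 :: 'a^'n) \<in> coord J \<longleftrightarrow> l \<in> J" for l J by (rule axis_in_coord)
  have kne: "k \<noteq> d - k" using kd by simp
  have WW': "W \<noteq> W'" using ax[of p JW] ax[of p JW'] m unfolding W_def W'_def by auto
  have UU': "U \<noteq> U'" using ax[of r JU] ax[of r JU'] m unfolding U_def U'_def by auto
  have W'U': "\<not> W' \<subseteq> U'" using ax[of p JW'] ax[of p JU'] m unfolding W'_def U'_def by auto
  have uniq: "c = y" if c: "c \<in> ?Om" "c \<inter> x1 \<noteq> {}" "c \<inter> x2 \<noteq> {}" for c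
  proof -
    obtain A B where AB: "c = {A, B}" "vec.dim A = k" "vec.dim B = d - k" "A \<subseteq> B"
      using flags2_ex[OF c(1)] d_def by blast
    have c1: "A = W \<or> B = U'"
    proof -
      obtain Z where "Z \<in> c" "Z \<in> x1" using c(2) by blast
      then show ?thesis using AB dW kne unfolding x1_def by auto
    qed
    have c2: "A = W' \<or> B = U"
    proof -
      obtain Z where "Z \<in> c" "Z \<in> x2" using c(3) by blast
      then show ?thesis using AB dW kne unfolding x2_def by auto
    qed
    show ?thesis using c1 c2 WW' UU' W'U' AB(1,4) unfolding y_def by auto
  qed
  have red: "g y = y" if g: "g \<in> G" "g x1 = x1" "g x2 = x2" for g
  proof -
    have gO: "g y \<in> ?Om" using g(1) GB yO unfolding Bij_def bij_betw_def by blast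
    have "y \<inter> x1 \<noteq> {}" unfolding y_def x1_def by auto
    then have "g y \<inter> g x1 \<noteq> {}" using GF[OF g(1)] yO x1O unfolding Fwd_def by blast
    moreover have "y \<inter> x2 \<noteq> {}" unfolding y_def x2_def by auto
    then have "g y \<inter> g x2 \<noteq> {}" using GF[OF g(1)] yO x2O unfolding Fwd_def by blast
    ultimately show ?thesis using uniq[OF gO] g(2,3) by simp
  qed
  have eqstab: "pstab G [y, x1, x2] = pstab G [x1, x2]"
    using red unfolding pstab_def by auto
  have PG: "psl i j k \<in> G" if "i \<noteq> j" for i j using psl_in[OF that] assms(5) by blast
  have g1: "psl r a k y \<noteq> y"
  proof -
    have "tmap r a ` W \<notin> {W, U}" unfolding W_def U_def
      by (rule move_helper) (use ar m in auto)
    then show ?thesis unfolding y_def by (intro psl_move[OF yO[unfolded y_def]]) simp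
  qed
  have g2a: "psl p r k y = y"
  proof -
    have f1: "tmap p r ` W = W" unfolding W_def by (rule tmap_coord[OF pr]) (use m in simp)
    have f2: "tmap p r ` U = U" unfolding U_def by (rule tmap_coord[OF pr]) (use m in simp)
    show ?thesis unfolding y_def by (rule psl_fix[OF yO[unfolded y_def] f1 f2])
  qed
  have g2b: "psl p r k x1 \<noteq> x1"
  proof -
    have "tmap p r ` U' \<notin> {U', W}" unfolding W_def U'_def
      by (rule move_helper) (use pr m in auto)
    then have "tmap p r ` U' \<notin> {W, U'}" by (simp add: insert_commute)
    then show ?thesis unfolding x1_def by (intro psl_move[OF x1O[unfolded x1_def]]) simp
  qed
  have g3a: "psl a p k y = y"
  proof -
    have f1: "tmap a p ` W = W" unfolding W_def by (rule tmap_coord[OF ap]) (use m in simp)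
    have f2: "tmap a p ` U = U" unfolding U_def by (rule tmap_coord[OF ap]) (use m in simp)
    show ?thesis unfolding y_def by (rule psl_fix[OF yO[unfolded y_def] f1 f2])
  qed
  have g3b: "psl a p k x1 = x1"
  proof -
    have f1: "tmap a p ` W = W" unfolding W_def by (rule tmap_coord[OF ap]) (use m in simp)
    have f2: "tmap a p ` U' = U'" unfolding U'_def by (rule tmap_coord[OF ap]) (use m in simp)
    show ?thesis unfolding x1_def by (rule psl_fix[OF x1O[unfolded x1_def] f1 f2])
  qed
  have g3c: "psl a p k x2 \<noteq> x2"
  proof -
    let ?v = "axis a 1 :: 'a^'n"
    have v0: "?v \<notin> W'" unfolding W'_def using m by (simp add: axis_in_coord)
    have "tmap a p ?v \<notin> tmap a p ` W'"
      using not_in_image_inj[OF tmap_inj[OF ap] v0] .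
    moreover have "tmap a p ?v = ?v" by (rule tmap_axis_other[OF ap])
    ultimately have v1: "?v \<notin> tmap a p ` W'" by simp
    have v2: "?v \<in> U" unfolding U_def using m by (simp add: axis_in_coord)
    have n1: "tmap a p ` W' \<noteq> U" using v1 v2 by blast
    have "tmap a p ` W' \<notin> {W', coord JW}" unfolding W'_def
      by (rule move_helper) (use ap m in auto)
    then have n2: "tmap a p ` W' \<noteq> W'" by simp
    have "tmap a p ` W' \<notin> {W', U}" using n1 n2 by simp
    then show ?thesis unfolding x2_def by (intro psl_move[OF x2O[unfolded x2_def]]) simp
  qed
  have g4: "psl p a k x1 \<noteq> x1"
  proof -
    have "tmap p a ` W \<notin> {W, U'}" unfolding W_def U'_def
      by (rule move_helper) (use ap m in auto)
    then show ?thesis unfolding x1_def by (intro psl_move[OF x1O[unfolded x1_def]]) simp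
  qed
  have sa0: "pstab G ([] @ [y]) \<subset> pstab G []"
    by (rule strict_step[OF PG[OF ar[symmetric]]]) (use g1 in auto)
  have sa1: "pstab G ([y] @ [x1]) \<subset> pstab G [y]"
    by (rule strict_step[OF PG[OF pr]]) (use g2a g2b in auto)
  have sa2: "pstab G ([y, x1] @ [x2]) \<subset> pstab G [y, x1]"
    by (rule strict_step[OF PG[OF ap]]) (use g3a g3b g3c in auto)
  have sb0: "pstab G ([] @ [x1]) \<subset> pstab G []"
    by (rule strict_step[OF PG[OF ap[symmetric]]]) (use g4 in auto)
  have sb1: "pstab G ([x1] @ [x2]) \<subset> pstab G [x1]"
    by (rule strict_step[OF PG[OF ap]]) (use g3b g3c in auto)
  have chA: "\<forall>i < length [y, x1, x2]. pstab G (take (Suc i) [y, x1, x2]) \<subset> pstab G (take i [y, x1, x2])"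
  proof (intro allI impI)
    fix i assume "i < length [y, x1, x2]"
    then have "i = 0 \<or> i = 1 \<or> i = 2" by auto
    then show "pstab G (take (Suc i) [y, x1, x2]) \<subset> pstab G (take i [y, x1, x2])"
      using sa0 sa1 sa2 by (auto simp: numeral_2_eq_2)
  qed
  have chB: "\<forall>i < length [x1, x2]. pstab G (take (Suc i) [x1, x2]) \<subset> pstab G (take i [x1, x2])"
  proof (intro allI impI)
    fix i assume "i < length [x1, x2]"
    then have "i = 0 \<or> i = 1" by auto
    then show "pstab G (take (Suc i) [x1, x2]) \<subset> pstab G (take i [x1, x2])"
      using sb0 sb1 by auto
  qed
  show ?thesis
    by (rule nonIBIS_crit[OF sub fin _ _ eqstab chA chB]) (use yO x1O x2O in auto)
qed

end
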